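(* Let $G$ be a graph without isolated vertices. Then (1) $\dfrac{2|V(G)|}{\Delta(G)+1}\le \gamma_{\times 2}(G)\le \gamma_{gr}^{\times 2}(G)\le |V(G)|+1-\delta(G)$; (2) $\gamma_{gr}(G)+1\le \gamma_{gr}^{\times 2}(G)\le 2\gamma_{gr}(G)$.
   Context: Graphs are finite, simple, undirected; $N[v]$ is the closed neighborhood, $\Delta(G)$ and $\delta(G)$ the maximum and minimum degree. A set $D$ is a double dominating set if $|N[w]\cap D|\ge 2$ for all $w\in V(G)$; $\gamma_{\times 2}(G)$ is the minimum size of a double dominating set. A sequence $(v_1,\dots,v_k)$ of distinct vertices is legal if $N[v_i]\setminus\bigcup_{j<i}N[v_j]\neq\emptyset$ for every $i\ge 2$; it is a dominating sequence if moreover $\{v_1,\dots,v_k\}$ is a dominating set; $\gamma_{gr}(G)$ (Grundy domination number) is the maximum length of a dominating sequence. A sequence $S=(v_1,\dots,v_k)$ of distinct vertices is a double neighborhood sequence (DNS) if for each $i$ some $u\in N[v_i]$ satisfies $|\{j<i: u\in N[v_j]\}|\le 1$; it is a double dominating sequence (DDS) if in addition its vertex set is a double dominating set. $\gamma_{gr}^{\times 2}(G)$ (Grundy double domination number) is the maximum length of a DDS. *)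

theory Defs
  imports Complex_Main
begin

definition graph :: "'a set \<Rightarrow> ('a \<Rightarrow> 'a \<Rightarrow> bool) \<Rightarrow> bool" where
  "graph V E \<longleftrightarrow> finite V \<and> (\<forall>x y. E x y \<longrightarrow> x \<in> V \<and> y \<in> V)
     \<and> (\<forall>x y. E x y \<longrightarrow> E y x) \<and> (\<forall>x. \<not> E x x)"

definition cnbhd :: "'a set \<Rightarrow> ('a \<Rightarrow> 'a \<Rightarrow> bool) \<Rightarrow> 'a \<Rightarrow> 'a set" where
  "cnbhd V E v = {u \<in> V. u = v \<or> E v u}"

definition degree :: "'a set \<Rightarrow> ('a \<Rightarrow> 'a \<Rightarrow> bool) \<Rightarrow> 'a \<Rightarrow> nat" where
  "degree V E v = card {u \<in> V. E v u}"

definition max_degree :: "'a set \<Rightarrow> ('a \<Rightarrow> 'a \<Rightarrow> bool) \<Rightarrow> nat" where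
  "max_degree V E = Max (degree V E ` V)"

definition min_degree :: "'a set \<Rightarrow> ('a \<Rightarrow> 'a \<Rightarrow> bool) \<Rightarrow> nat" where
  "min_degree V E = Min (degree V E ` V)"

definition no_isolated :: "'a set \<Rightarrow> ('a \<Rightarrow> 'a \<Rightarrow> bool) \<Rightarrow> bool" where
  "no_isolated V E \<longleftrightarrow> (\<forall>v \<in> V. \<exists>u. E v u)"

definition double_dom_set :: "'a set \<Rightarrow> ('a \<Rightarrow> 'a \<Rightarrow> bool) \<Rightarrow> 'a set \<Rightarrow> bool" where
  "double_dom_set V E D \<longleftrightarrow> D \<subseteq> V \<and> (\<forall>w \<in> V. card (cnbhd V E w \<inter> D) \<ge> 2)"

definition double_dom_number :: "'a set \<Rightarrow> ('a \<Rightarrow> 'a \<Rightarrow> bool) \<Rightarrow> nat" where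
  "double_dom_number V E = Min {card D | D. double_dom_set V E D}"

definition legal_seq :: "'a set \<Rightarrow> ('a \<Rightarrow> 'a \<Rightarrow> bool) \<Rightarrow> 'a list \<Rightarrow> bool" where
  "legal_seq V E xs \<longleftrightarrow> distinct xs \<and> set xs \<subseteq> V \<and>
     (\<forall>i < length xs. 1 \<le> i \<longrightarrow>
        cnbhd V E (xs ! i) - (\<Union>j < i. cnbhd V E (xs ! j)) \<noteq> {})"

definition dominating_seq :: "'a set \<Rightarrow> ('a \<Rightarrow> 'a \<Rightarrow> bool) \<Rightarrow> 'a list \<Rightarrow> bool" where
  "dominating_seq V E xs \<longleftrightarrow> legal_seq V E xs \<and>
     (\<forall>w \<in> V. \<exists>v \<in> set xs. w \<in> cnbhd V E v)"

definition grundy_dom :: "'a set \<Rightarrow> ('a \<Rightarrow> 'a \<Rightarrow> bool) \<Rightarrow> nat" where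
  "grundy_dom V E = Max {length xs | xs. dominating_seq V E xs}"

definition double_nbhd_seq :: "'a set \<Rightarrow> ('a \<Rightarrow> 'a \<Rightarrow> bool) \<Rightarrow> 'a list \<Rightarrow> bool" where
  "double_nbhd_seq V E xs \<longleftrightarrow> distinct xs \<and> set xs \<subseteq> V \<and>
     (\<forall>i < length xs. \<exists>u \<in> cnbhd V E (xs ! i).
        card {j. j < i \<and> u \<in> cnbhd V E (xs ! j)} \<le> 1)"

definition double_dom_seq :: "'a set \<Rightarrow> ('a \<Rightarrow> 'a \<Rightarrow> bool) \<Rightarrow> 'a list \<Rightarrow> bool" where
  "double_dom_seq V E xs \<longleftrightarrow> double_nbhd_seq V E xs \<and> double_dom_set V E (set xs)"

definition grundy_double_dom :: "'a set \<Rightarrow> ('a \<Rightarrow> 'a \<Rightarrow> bool) \<Rightarrow> nat" where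
  "grundy_double_dom V E = Max {length xs | xs. double_dom_seq V E xs}"

end

theory Submission
  imports Defs
begin

lemma cn_sym:
  assumes "graph V E" "u \<in> V" "v \<in> V"
  shows "u \<in> cnbhd V E v \<longleftrightarrow> v \<in> cnbhd V E u"
  using assms unfolding graph_def cnbhd_def by auto

lemma cn_self: "v \<in> V \<Longrightarrow> v \<in> cnbhd V E v"
  unfolding cnbhd_def by auto

lemma cn_sub: "cnbhd V E v \<subseteq> V"
  unfolding cnbhd_def by auto

lemma cn_card:
  assumes "graph V E" "v \<in> V"
  shows "card (cnbhd V E v) = degree V E v + 1"
proof -
  have "cnbhd V E v = insert v {u \<in> V. E v u}" using assms unfolding cnbhd_def by auto
  moreover have "v \<notin> {u \<in> V. E v u}" using assms unfolding graph_def by auto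
  moreover have "finite {u \<in> V. E v u}" using assms unfolding graph_def by auto
  ultimately show ?thesis unfolding degree_def by simp
qed

lemma cn_card2:
  assumes "graph V E" "no_isolated V E" "v \<in> V"
  shows "card (cnbhd V E v) \<ge> 2"
proof -
  obtain u where "E v u" using assms unfolding no_isolated_def by auto
  hence "u \<in> V" "u \<noteq> v" using assms unfolding graph_def by auto
  hence "{u \<in> V. E v u} \<noteq> {}" using \<open>E v u\<close> by auto
  moreover have "finite {u \<in> V. E v u}" using assms unfolding graph_def by auto
  ultimately have "degree V E v \<ge> 1" unfolding degree_def
    by (simp add: Suc_leI card_gt_0_iff)
  thus ?thesis using cn_card[OF assms(1,3)] by simp
qed

lemma card_idx:
  assumes "distinct xs" "i \<le> length xs"
  shows "card {j. j < i \<and> xs ! j \<in> S} = card (set (take i xs) \<inter> S)"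
proof -
  have "(\<lambda>j. xs ! j) ` {j. j < i \<and> xs ! j \<in> S} = set (take i xs) \<inter> S"
    using assms by (auto simp: set_conv_nth nth_take) (metis nth_take order_less_le_trans)
  moreover have "inj_on (\<lambda>j. xs ! j) {j. j < i \<and> xs ! j \<in> S}"
    using assms by (auto simp: inj_on_def nth_eq_iff_index_eq)
  ultimately show ?thesis by (metis card_image)
qed

lemma len_le:
  assumes "graph V E" "distinct xs" "set xs \<subseteq> V"
  shows "length xs \<le> card V"
  using assms by (metis card_mono distinct_card graph_def)


lemma dns_snoc:
  assumes "double_nbhd_seq V E xs" "x \<in> V" "x \<notin> set xs" "u \<in> cnbhd V E x"
    "card {j. j < length xs \<and> u \<in> cnbhd V E (xs ! j)} \<le> 1"
  shows "double_nbhd_seq V E (xs @ [x])"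
  unfolding double_nbhd_seq_def
proof (intro conjI allI impI)
  show "distinct (xs @ [x])" "set (xs @ [x]) \<subseteq> V" using assms unfolding double_nbhd_seq_def by auto
  fix i assume i: "i < length (xs @ [x])"
  show "\<exists>u\<in>cnbhd V E ((xs @ [x]) ! i). card {j. j < i \<and> u \<in> cnbhd V E ((xs @ [x]) ! j)} \<le> 1"
  proof (cases "i < length xs")
    case True
    then obtain w where w: "w \<in> cnbhd V E (xs ! i)" "card {j. j < i \<and> w \<in> cnbhd V E (xs ! j)} \<le> 1"
      using assms(1) unfolding double_nbhd_seq_def by blast
    have eq: "{j. j < i \<and> w \<in> cnbhd V E ((xs @ [x]) ! j)} = {j. j < i \<and> w \<in> cnbhd V E (xs ! j)}"
      using True by (auto simp: nth_append)
    have e: "(xs @ [x]) ! i = xs ! i" using True by (simp add: nth_append)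
    show ?thesis
    proof (rule bexI[of _ w])
      show "card {j. j < i \<and> w \<in> cnbhd V E ((xs @ [x]) ! j)} \<le> 1" using eq w(2) by simp
      show "w \<in> cnbhd V E ((xs @ [x]) ! i)" using e w(1) by simp
    qed
  next
    case False
    hence "i = length xs" using i by simp
    moreover have "{j. j < length xs \<and> u \<in> cnbhd V E ((xs @ [x]) ! j)} = {j. j < length xs \<and> u \<in> cnbhd V E (xs ! j)}"
      by (auto simp: nth_append)
    ultimately show ?thesis using assms(4,5) by (intro bexI[of _ u]) auto
  qed
qed

lemma dns_extend:
  assumes g: "graph V E" and ni: "no_isolated V E"
  shows "double_nbhd_seq V E xs \<Longrightarrow> \<exists>ys. double_dom_seq V E (xs @ ys)"
proof (induction "card V - length xs" arbitrary: xs rule: less_induct)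
  case less
  show ?case
  proof (cases "double_dom_set V E (set xs)")
    case True
    thus ?thesis using less.prems unfolding double_dom_seq_def by (intro exI[of _ "[]"]) simp
  next
    case False
    have sub: "set xs \<subseteq> V" and dis: "distinct xs" using less.prems unfolding double_nbhd_seq_def by auto
    then obtain w where w: "w \<in> V" "card (cnbhd V E w \<inter> set xs) < 2"
      using False unfolding double_dom_set_def by auto
    have fin: "finite (cnbhd V E w)" using g cn_sub[of V E w] unfolding graph_def by (metis finite_subset)
    have "card (cnbhd V E w) \<ge> 2" using cn_card2[OF g ni w(1)] .
    hence "\<not> cnbhd V E w \<subseteq> set xs" using w(2)
      by (metis inf.absorb1 not_less)
    then obtain x where x: "x \<in> cnbhd V E w" "x \<notin> set xs" by auto
    have xV: "x \<in> V" using x(1) cn_sub[of V E w] by blast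
    have "card {j. j < length xs \<and> xs ! j \<in> cnbhd V E w} = card (set xs \<inter> cnbhd V E w)"
      using card_idx[OF dis, of "length xs"] by simp
    moreover have "{j. j < length xs \<and> w \<in> cnbhd V E (xs ! j)} = {j. j < length xs \<and> xs ! j \<in> cnbhd V E w}"
    proof (intro Collect_cong)
      fix j
      show "(j < length xs \<and> w \<in> cnbhd V E (xs ! j)) = (j < length xs \<and> xs ! j \<in> cnbhd V E w)"
        using cn_sym[OF g w(1)] sub nth_mem by blast
    qed
    ultimately have c: "card {j. j < length xs \<and> w \<in> cnbhd V E (xs ! j)} \<le> 1"
      using w(2) by (simp add: Int_commute)
    have wx: "w \<in> cnbhd V E x" using cn_sym[OF g w(1) xV] x(1) by simp
    have dns: "double_nbhd_seq V E (xs @ [x])" using dns_snoc[OF less.prems xV x(2) wx c] .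
    have "length xs < card V" using len_le[OF g, of "xs @ [x]"] dns unfolding double_nbhd_seq_def by simp
    hence "card V - length (xs @ [x]) < card V - length xs" by simp
    from less.hyps[OF this dns] obtain ys where "double_dom_seq V E (xs @ [x] @ ys)" by auto
    thus ?thesis by blast
  qed
qed

lemma legal_snoc:
  assumes "legal_seq V E xs" "x \<in> V" "x \<notin> set xs" "u \<in> cnbhd V E x"
    "\<forall>j < length xs. u \<notin> cnbhd V E (xs ! j)"
  shows "legal_seq V E (xs @ [x])"
  unfolding legal_seq_def
proof (intro conjI allI impI)
  show "distinct (xs @ [x])" "set (xs @ [x]) \<subseteq> V" using assms unfolding legal_seq_def by auto
  fix i assume i: "i < length (xs @ [x])" "1 \<le> i"
  show "cnbhd V E ((xs @ [x]) ! i) - (\<Union>j<i. cnbhd V E ((xs @ [x]) ! j)) \<noteq> {}"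
  proof (cases "i < length xs")
    case True
    hence "cnbhd V E (xs ! i) - (\<Union>j<i. cnbhd V E (xs ! j)) \<noteq> {}"
      using assms(1) i unfolding legal_seq_def by blast
    moreover have "(\<Union>j<i. cnbhd V E ((xs @ [x]) ! j)) = (\<Union>j<i. cnbhd V E (xs ! j))"
      using True by (auto simp: nth_append)
    ultimately show ?thesis using True by (auto simp: nth_append)
  next
    case False
    hence "i = length xs" using i by simp
    thus ?thesis using assms(4,5) by (auto simp: nth_append)
  qed
qed

lemma legal_extend:
  assumes g: "graph V E"
  shows "legal_seq V E xs \<Longrightarrow> \<exists>ys. dominating_seq V E (xs @ ys)"
proof (induction "card V - length xs" arbitrary: xs rule: less_induct)
  case less
  show ?case
  proof (cases "\<forall>w \<in> V. \<exists>v \<in> set xs. w \<in> cnbhd V E v")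
    case True
    thus ?thesis using less.prems unfolding dominating_seq_def by (intro exI[of _ "[]"]) simp
  next
    case False
    then obtain w where w: "w \<in> V" "\<forall>v \<in> set xs. w \<notin> cnbhd V E v" by auto
    have wn: "w \<notin> set xs" using w(2) cn_self[OF w(1)] by blast
    have "\<forall>j < length xs. w \<notin> cnbhd V E (xs ! j)" using w(2) by auto
    hence lg: "legal_seq V E (xs @ [w])" using legal_snoc[OF less.prems w(1) wn cn_self[OF w(1)]] by simp
    have "length xs < card V" using len_le[OF g, of "xs @ [w]"] lg unfolding legal_seq_def by simp
    hence "card V - length (xs @ [w]) < card V - length xs" by simp
    from less.hyps[OF this lg] obtain ys where "dominating_seq V E (xs @ [w] @ ys)" by auto
    thus ?thesis by blast
  qed
qed

lemma legal_dns:
  assumes "legal_seq V E xs"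
  shows "double_nbhd_seq V E xs"
  unfolding double_nbhd_seq_def
proof (intro conjI allI impI)
  show "distinct xs" "set xs \<subseteq> V" using assms unfolding legal_seq_def by auto
  fix i assume i: "i < length xs"
  show "\<exists>u\<in>cnbhd V E (xs ! i). card {j. j < i \<and> u \<in> cnbhd V E (xs ! j)} \<le> 1"
  proof (cases "i = 0")
    case True
    have "xs ! i \<in> V" using i \<open>set xs \<subseteq> V\<close> by auto
    thus ?thesis using True cn_self by fastforce
  next
    case False
    hence "1 \<le> i" by simp
    hence "cnbhd V E (xs ! i) - (\<Union>j<i. cnbhd V E (xs ! j)) \<noteq> {}"
      using assms i unfolding legal_seq_def by blast
    then obtain u where "u \<in> cnbhd V E (xs ! i)" "u \<notin> (\<Union>j<i. cnbhd V E (xs ! j))"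
      by blast
    hence "{j. j < i \<and> u \<in> cnbhd V E (xs ! j)} = {}" by auto
    thus ?thesis using \<open>u \<in> _\<close> by (metis card.empty zero_le_one)
  qed
qed


function par :: "(nat \<Rightarrow> nat) \<Rightarrow> nat \<Rightarrow> bool" where
  "par p i = (if p i < i then \<not> par p (p i) else True)"
  by auto
termination by (relation "measure (\<lambda>(p, i). i)") auto

declare par.simps [simp del]

lemma par_neq: "p i < i \<Longrightarrow> par p i \<noteq> par p (p i)"
  by (subst par.simps) simp

lemma dns_half:
  assumes g: "graph V E" and d: "double_nbhd_seq V E xs"
  shows "\<exists>ys. legal_seq V E ys \<and> length xs \<le> 2 * length ys"
proof -
  define k where "k = length xs"
  have dis: "distinct xs" and sub: "set xs \<subseteq> V" using d unfolding double_nbhd_seq_def by auto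
  have "\<forall>i\<in>{..<k}. \<exists>u. u \<in> cnbhd V E (xs ! i) \<and> card {j. j < i \<and> u \<in> cnbhd V E (xs ! j)} \<le> 1"
    using d unfolding double_nbhd_seq_def k_def by blast
  from bchoice[OF this] obtain f where
    f0: "\<forall>i\<in>{..<k}. f i \<in> cnbhd V E (xs ! i) \<and> card {j. j < i \<and> f i \<in> cnbhd V E (xs ! j)} \<le> 1"
    by blast
  have f: "\<And>i. i < k \<Longrightarrow> f i \<in> cnbhd V E (xs ! i) \<and> card {j. j < i \<and> f i \<in> cnbhd V E (xs ! j)} \<le> 1"
    using f0 by blast
  define P where "P i = {j. j < i \<and> f i \<in> cnbhd V E (xs ! j)}" for i
  define p where "p i = (if P i = {} then i else the_elem (P i))" for i
  have key: "p i = j \<and> p i < i" if "i < k" "j < i" "f i \<in> cnbhd V E (xs ! j)" for i j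
  proof -
    have jP: "j \<in> P i" using that unfolding P_def by auto
    have fin: "finite (P i)" unfolding P_def by auto
    have "card (P i) \<le> Suc 0" using f[OF that(1)] unfolding P_def by simp
    hence "\<forall>a\<in>P i. \<forall>b\<in>P i. a = b" using card_le_Suc0_iff_eq[OF fin] by blast
    hence "P i = {j}" using jP by blast
    thus ?thesis using that unfolding p_def by simp
  qed
  define K where "K b = {i. i < k \<and> par p i = b}" for b
  have legal: "legal_seq V E (map (\<lambda>i. xs ! i) (sorted_list_of_set (K b)))" for b
  proof -
    define ks where "ks = sorted_list_of_set (K b)"
    have finK: "finite (K b)" unfolding K_def by auto
    have setks: "set ks = K b" unfolding ks_def using finK by simp
    have sw: "sorted_wrt (<) ks" unfolding ks_def by (rule strict_sorted_list_of_set)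
    have dks: "distinct ks" unfolding ks_def by simp
    have ksk: "\<And>a. a < length ks \<Longrightarrow> ks ! a < k \<and> par p (ks ! a) = b"
      using setks nth_mem unfolding K_def by blast
    have inj: "inj_on (\<lambda>i. xs ! i) (set ks)"
      using setks dis unfolding K_def k_def by (auto simp: inj_on_def nth_eq_iff_index_eq)
    show ?thesis unfolding legal_seq_def ks_def[symmetric]
    proof (intro conjI allI impI)
      show "distinct (map (\<lambda>i. xs ! i) ks)" using dks inj by (simp add: distinct_map)
      show "set (map (\<lambda>i. xs ! i) ks) \<subseteq> V" using setks sub unfolding K_def k_def by auto
      fix a assume a: "a < length (map (\<lambda>i. xs ! i) ks)" "1 \<le> a"
      hence a': "a < length ks" by simp
      define i where "i = ks ! a"
      have ik: "i < k" and ib: "par p i = b" using ksk[OF a'] unfolding i_def by auto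
      have fi: "f i \<in> cnbhd V E (map (\<lambda>i. xs ! i) ks ! a)" using f[OF ik] a' unfolding i_def by simp
      have "f i \<notin> (\<Union>c<a. cnbhd V E (map (\<lambda>i. xs ! i) ks ! c))"
      proof
        assume "f i \<in> (\<Union>c<a. cnbhd V E (map (\<lambda>i. xs ! i) ks ! c))"
        then obtain c where c: "c < a" "f i \<in> cnbhd V E (xs ! (ks ! c))" using a' by auto
        have ji: "ks ! c < i" unfolding i_def using sorted_wrt_nth_less[OF sw c(1) a'] .
        have "p i = ks ! c \<and> p i < i" using key[OF ik ji c(2)] .
        hence "par p i \<noteq> par p (ks ! c)" using par_neq[of p i] by simp
        moreover have "par p (ks ! c) = b" using ksk c(1) a' by simp
        ultimately show False using ib by simp
      qed
      thus "cnbhd V E (map (\<lambda>i. xs ! i) ks ! a) - (\<Union>c<a. cnbhd V E (map (\<lambda>i. xs ! i) ks ! c)) \<noteq> {}"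
        using fi by blast
    qed
  qed
  have len: "length (map (\<lambda>i. xs ! i) (sorted_list_of_set (K b))) = card (K b)" for b
    by simp
  have "K True \<union> K False = {..<k}" "K True \<inter> K False = {}" unfolding K_def by auto
  moreover have "card (K True \<union> K False) = card (K True) + card (K False)"
    by (rule card_Un_disjoint) (auto simp: K_def)
  ultimately have ck: "card (K True) + card (K False) = k" by simp
  obtain b where b: "k \<le> 2 * card (K b)"
  proof (cases "card (K False) \<le> card (K True)")
    case True
    thus ?thesis using ck that[of True] by linarith
  next
    case False
    thus ?thesis using ck that[of False] by linarith
  qed
  show ?thesis
    by (rule exI[of _ "map (\<lambda>i. xs ! i) (sorted_list_of_set (K b))"]) (use legal[of b] len[of b] b in \<open>simp add: k_def\<close>)
qed


lemma V_dds:
  assumes g: "graph V E" and ni: "no_isolated V E"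
  shows "double_dom_set V E V"
  unfolding double_dom_set_def
proof (intro conjI ballI)
  show "V \<subseteq> V" by simp
  fix w assume w: "w \<in> V"
  have "cnbhd V E w \<inter> V = cnbhd V E w" using cn_sub[of V E w] by blast
  thus "2 \<le> card (cnbhd V E w \<inter> V)" using cn_card2[OF g ni w] by simp
qed

lemma fin_len:
  assumes g: "graph V E" and h: "\<And>xs. P xs \<Longrightarrow> distinct xs \<and> set xs \<subseteq> V"
  shows "finite {length xs | xs. P xs}"
proof -
  have "{length xs | xs. P xs} \<subseteq> {..card V}" using len_le[OF g] h by auto
  thus ?thesis using finite_subset by blast
qed

lemma dds_bound:
  assumes g: "graph V E" and ne: "V \<noteq> {}" and dd: "double_dom_seq V E xs"
  shows "length xs + min_degree V E \<le> card V + 1"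
proof -
  have dis: "distinct xs" and sub: "set xs \<subseteq> V" and dn: "double_nbhd_seq V E xs"
    and ds: "double_dom_set V E (set xs)"
    using dd unfolding double_dom_seq_def double_nbhd_seq_def by auto
  have finV: "finite V" using g unfolding graph_def by auto
  obtain w where "w \<in> V" using ne by auto
  hence "card (cnbhd V E w \<inter> set xs) \<ge> 2" using ds unfolding double_dom_set_def by auto
  hence "xs \<noteq> []" by (cases xs) auto
  define i where "i = length xs - 1"
  have il: "i < length xs" using \<open>xs \<noteq> []\<close> unfolding i_def by simp
  obtain u where u: "u \<in> cnbhd V E (xs ! i)" "card {j. j < i \<and> u \<in> cnbhd V E (xs ! j)} \<le> 1"
    using dn il unfolding double_nbhd_seq_def by blast
  have uV: "u \<in> V" using u(1) cn_sub[of V E "xs ! i"] by blast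
  have "{j. j < i \<and> u \<in> cnbhd V E (xs ! j)} = {j. j < i \<and> xs ! j \<in> cnbhd V E u}"
  proof (intro Collect_cong)
    fix j
    have "xs ! j \<in> V" if "j < i"
    proof -
      have "xs ! j \<in> set xs" using that il by (intro nth_mem) linarith
      thus ?thesis using sub by blast
    qed
    thus "(j < i \<and> u \<in> cnbhd V E (xs ! j)) = (j < i \<and> xs ! j \<in> cnbhd V E u)"
      using cn_sym[OF g uV] by blast
  qed
  hence c1: "card (set (take i xs) \<inter> cnbhd V E u) \<le> 1"
    using u(2) card_idx[OF dis, of i "cnbhd V E u"] il by simp
  have t1: "take (Suc i) xs = take i xs @ [xs ! i]" by (rule take_Suc_conv_app_nth[OF il])
  have t2: "take (Suc i) xs = xs" using il unfolding i_def by simp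
  have sx: "set xs = insert (xs ! i) (set (take i xs))"
    using arg_cong[OF t1, of set] unfolding t2 by simp
  have "set xs \<inter> cnbhd V E u \<subseteq> insert (xs ! i) (set (take i xs) \<inter> cnbhd V E u)" using sx by blast
  hence "card (set xs \<inter> cnbhd V E u) \<le> card (insert (xs ! i) (set (take i xs) \<inter> cnbhd V E u))"
    by (intro card_mono) auto
  also have "\<dots> \<le> Suc (card (set (take i xs) \<inter> cnbhd V E u))" by (simp add: card_insert_le_m1)
  finally have c2: "card (set xs \<inter> cnbhd V E u) \<le> 2" using c1 by simp
  have "cnbhd V E u \<subseteq> (set xs \<inter> cnbhd V E u) \<union> (V - set xs)" using cn_sub[of V E u] by blast
  hence "card (cnbhd V E u) \<le> card ((set xs \<inter> cnbhd V E u) \<union> (V - set xs))"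
    using finV by (intro card_mono) auto
  also have "\<dots> \<le> card (set xs \<inter> cnbhd V E u) + card (V - set xs)" by (rule card_Un_le)
  also have "card (V - set xs) = card V - length xs"
    using card_Diff_subset[OF _ sub] distinct_card[OF dis] by simp
  finally have c3: "card (cnbhd V E u) \<le> 2 + (card V - length xs)" using c2 by simp
  have "length xs \<le> card V" using len_le[OF g dis sub] .
  moreover have "min_degree V E \<le> degree V E u"
    unfolding min_degree_def using finV uV by (intro Min_le) auto
  moreover have "card (cnbhd V E u) = degree V E u + 1" using cn_card[OF g uV] .
  ultimately show ?thesis using c3 by linarith
qed


theorem proposition1:
  fixes V :: "'a set" and E :: "'a \<Rightarrow> 'a \<Rightarrow> bool"
  assumes "graph V E" and "V \<noteq> {}" and "no_isolated V E"
  shows "2 * real (card V) / (real (max_degree V E) + 1) \<le> real (double_dom_number V E)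
       \<and> double_dom_number V E \<le> grundy_double_dom V E
       \<and> grundy_double_dom V E \<le> card V + 1 - min_degree V E
       \<and> grundy_dom V E + 1 \<le> grundy_double_dom V E
       \<and> grundy_double_dom V E \<le> 2 * grundy_dom V E"
proof -
  note g = assms(1) and ne = assms(2) and ni = assms(3)
  have finV: "finite V" using g unfolding graph_def by auto
  have finDD: "finite {length xs | xs. double_dom_seq V E xs}"
    by (rule fin_len[OF g]) (auto simp: double_dom_seq_def double_nbhd_seq_def)
  have "double_nbhd_seq V E []" unfolding double_nbhd_seq_def by simp
  from dns_extend[OF g ni this] obtain x0 where x0: "double_dom_seq V E ([] @ x0)" by blast
  have neDD: "{length xs | xs. double_dom_seq V E xs} \<noteq> {}" using x0 by auto
  have gdd_ge: "length xs \<le> grundy_double_dom V E" if "double_dom_seq V E xs" for xs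
    unfolding grundy_double_dom_def using finDD that by (intro Max_ge) auto
  obtain xm where xm: "double_dom_seq V E xm" "length xm = grundy_double_dom V E"
    using Max_in[OF finDD neDD] unfolding grundy_double_dom_def by auto
  have finD: "finite {length xs | xs. dominating_seq V E xs}"
    by (rule fin_len[OF g]) (auto simp: dominating_seq_def legal_seq_def)
  have "legal_seq V E []" unfolding legal_seq_def by simp
  from legal_extend[OF g this] obtain y0 where y0: "dominating_seq V E ([] @ y0)" by blast
  have neD: "{length xs | xs. dominating_seq V E xs} \<noteq> {}" using y0 by auto
  have gd_ge: "length xs \<le> grundy_dom V E" if "dominating_seq V E xs" for xs
    unfolding grundy_dom_def using finD that by (intro Max_ge) auto
  obtain ym where ym: "dominating_seq V E ym" "length ym = grundy_dom V E"
    using Max_in[OF finD neD] unfolding grundy_dom_def by auto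
  have finS: "finite {card D | D. double_dom_set V E D}"
  proof -
    have "{card D | D. double_dom_set V E D} \<subseteq> {..card V}"
      using finV by (auto simp: double_dom_set_def intro: card_mono)
    thus ?thesis using finite_subset by blast
  qed
  have neS: "{card D | D. double_dom_set V E D} \<noteq> {}" using V_dds[OF g ni] by auto
  obtain D where D: "double_dom_set V E D" "card D = double_dom_number V E"
    using Min_in[OF finS neS] unfolding double_dom_number_def by auto
  have DV: "D \<subseteq> V" using D(1) unfolding double_dom_set_def by auto
  have finD': "finite D" using DV finV finite_subset by blast
  have sw: "(\<Sum>w\<in>V. card (cnbhd V E w \<inter> D)) = (\<Sum>d\<in>D. card (cnbhd V E d))"
  proof -
    have "(\<Sum>w\<in>V. card (cnbhd V E w \<inter> D)) = (\<Sum>w\<in>V. \<Sum>d\<in>D. if d \<in> cnbhd V E w then 1 else 0)"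
    proof (rule sum.cong[OF refl])
      fix w assume "w \<in> V"
      have "cnbhd V E w \<inter> D = {d \<in> D. d \<in> cnbhd V E w}" by auto
      hence "card (cnbhd V E w \<inter> D) = (\<Sum>d\<in>{d \<in> D. d \<in> cnbhd V E w}. 1)" by simp
      also have "\<dots> = (\<Sum>d\<in>D. if d \<in> cnbhd V E w then 1 else 0)"
        by (rule sum.inter_filter[OF finD'])
      finally show "card (cnbhd V E w \<inter> D) = (\<Sum>d\<in>D. if d \<in> cnbhd V E w then 1 else 0)" .
    qed
    also have "\<dots> = (\<Sum>d\<in>D. \<Sum>w\<in>V. if d \<in> cnbhd V E w then 1 else 0)" by (rule sum.swap)
    also have "\<dots> = (\<Sum>d\<in>D. card (cnbhd V E d))"
    proof (rule sum.cong[OF refl])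
      fix d assume dD: "d \<in> D"
      hence dV: "d \<in> V" using DV by auto
      have "(\<Sum>w\<in>V. if d \<in> cnbhd V E w then 1 else 0) = (\<Sum>w\<in>{w \<in> V. d \<in> cnbhd V E w}. 1::nat)"
        by (rule sum.inter_filter[OF finV, symmetric])
      also have "{w \<in> V. d \<in> cnbhd V E w} = cnbhd V E d"
        using g dV unfolding cnbhd_def graph_def by auto
      finally show "(\<Sum>w\<in>V. if d \<in> cnbhd V E w then 1 else 0) = card (cnbhd V E d)" by simp
    qed
    finally show ?thesis .
  qed
  have "2 * card V = (\<Sum>w\<in>V. 2::nat)" by simp
  also have "\<dots> \<le> (\<Sum>w\<in>V. card (cnbhd V E w \<inter> D))"
    using D(1) unfolding double_dom_set_def by (intro sum_mono) auto
  also have "\<dots> = (\<Sum>d\<in>D. card (cnbhd V E d))" by (rule sw)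
  also have "\<dots> \<le> (\<Sum>d\<in>D. max_degree V E + 1)"
  proof (rule sum_mono)
    fix d assume "d \<in> D"
    hence dV: "d \<in> V" using DV by auto
    have "degree V E d \<le> max_degree V E" unfolding max_degree_def using finV dV by (intro Max_ge) auto
    thus "card (cnbhd V E d) \<le> max_degree V E + 1" using cn_card[OF g dV] by simp
  qed
  also have "\<dots> = card D * (max_degree V E + 1)" by simp
  finally have dc: "2 * card V \<le> card D * (max_degree V E + 1)" .
  hence "real (2 * card V) \<le> real (card D * (max_degree V E + 1))" by (simp only: of_nat_le_iff)
  hence r: "2 * real (card V) \<le> real (card D) * (real (max_degree V E) + 1)" by (simp add: algebra_simps)
  have p1: "2 * real (card V) / (real (max_degree V E) + 1) \<le> real (double_dom_number V E)"
    unfolding D(2)[symmetric] by (subst pos_divide_le_eq) (use r in auto)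
  have "double_dom_set V E (set xm)" using xm(1) unfolding double_dom_seq_def by auto
  hence "double_dom_number V E \<le> card (set xm)"
    unfolding double_dom_number_def using finS by (intro Min_le) auto
  also have "card (set xm) = length xm"
    using xm(1) distinct_card unfolding double_dom_seq_def double_nbhd_seq_def by auto
  finally have p2: "double_dom_number V E \<le> grundy_double_dom V E" using xm(2) by simp
  have p3: "grundy_double_dom V E \<le> card V + 1 - min_degree V E"
    using dds_bound[OF g ne xm(1)] xm(2) by simp
  have lm: "legal_seq V E ym" using ym(1) unfolding dominating_seq_def by auto
  obtain zs where zs: "double_dom_seq V E (ym @ zs)" using dns_extend[OF g ni legal_dns[OF lm]] by auto
  have "zs \<noteq> []"
  proof
    assume "zs = []"
    hence dset: "double_dom_set V E (set ym)" using zs unfolding double_dom_seq_def by simp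
    obtain w where "w \<in> V" using ne by auto
    then obtain v where "v \<in> set ym" using ym(1) unfolding dominating_seq_def by auto
    hence ymne: "ym \<noteq> []" by auto
    define i where "i = length ym - 1"
    have il: "i < length ym" using ymne unfolding i_def by simp
    have ymV: "set ym \<subseteq> V" using lm unfolding legal_seq_def by auto
    obtain u where u: "u \<in> V" "\<forall>j<i. u \<notin> cnbhd V E (ym ! j)" "u \<in> cnbhd V E (ym ! i)"
    proof (cases "i = 0")
      case True
      have yiV: "ym ! i \<in> V" using il ymV by auto
      show ?thesis
      proof (rule that[of "ym ! i"])
        show "ym ! i \<in> V" by (rule yiV)
        show "\<forall>j<i. ym ! i \<notin> cnbhd V E (ym ! j)" using True by simp
        show "ym ! i \<in> cnbhd V E (ym ! i)" by (rule cn_self[OF yiV])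
      qed
    next
      case False
      hence i1: "1 \<le> i" by simp
      have "\<forall>i < length ym. 1 \<le> i \<longrightarrow> cnbhd V E (ym ! i) - (\<Union>j<i. cnbhd V E (ym ! j)) \<noteq> {}"
        using lm unfolding legal_seq_def by blast
      hence "cnbhd V E (ym ! i) - (\<Union>j<i. cnbhd V E (ym ! j)) \<noteq> {}"
        using il i1 by blast
      then obtain u where "u \<in> cnbhd V E (ym ! i)" "u \<notin> (\<Union>j<i. cnbhd V E (ym ! j))" by blast
      thus ?thesis using that[of u] cn_sub[of V E "ym ! i"] by blast
    qed
    have "cnbhd V E u \<inter> set ym \<subseteq> {ym ! i}"
    proof
      fix x assume x: "x \<in> cnbhd V E u \<inter> set ym"
      then obtain j where j: "j < length ym" "x = ym ! j" by (auto simp: in_set_conv_nth)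
      have xV: "x \<in> V" using x ymV by auto
      hence "u \<in> cnbhd V E (ym ! j)" using x j cn_sym[OF g u(1) xV] by blast
      hence "\<not> j < i" using u(2) by auto
      hence "j = i" using j(1) unfolding i_def by simp
      thus "x \<in> {ym ! i}" using j by simp
    qed
    hence "card (cnbhd V E u \<inter> set ym) \<le> card {ym ! i}" by (intro card_mono) simp_all
    hence "card (cnbhd V E u \<inter> set ym) \<le> 1" by simp
    moreover have "card (cnbhd V E u \<inter> set ym) \<ge> 2" using dset u(1) unfolding double_dom_set_def by auto
    ultimately show False by simp
  qed
  hence "grundy_dom V E + 1 \<le> length (ym @ zs)" using ym(2) by (cases zs) auto
  hence p4: "grundy_dom V E + 1 \<le> grundy_double_dom V E" using gdd_ge[OF zs] by simp
  obtain ys where ys: "legal_seq V E ys" "length xm \<le> 2 * length ys"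
    using dns_half[OF g] xm(1) unfolding double_dom_seq_def by blast
  obtain ws where "dominating_seq V E (ys @ ws)" using legal_extend[OF g ys(1)] by blast
  hence "length ys \<le> grundy_dom V E" using gd_ge by fastforce
  hence p5: "grundy_double_dom V E \<le> 2 * grundy_dom V E" using ys(2) xm(2) by simp
  show ?thesis using p1 p2 p3 p4 p5 by blast
qed

end
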